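(* Let $G$ be a torsion-free abelian group, $R$ a $G$-graded ring, $I$ a finitely generated homogeneous ideal of $R$ and $M\in\mathcal{D}_{G\text{-gr}}(R)$. Then $M$ is derived gradedwise $I$-complete if and only if, for every $i\in\mathbb{Z}$, the discrete $G$-graded $R$-module $\pi_i(M)$, regarded as an object of $\mathcal{D}_{G\text{-gr}}(R)$, is derived gradedwise $I$-complete.
   Context: $\mathcal{D}_{G\text{-gr}}(\mathbb{Z}):=\mathrm{Fun}(G^{ds},\mathcal{D}(\mathbb{Z}))$ with Day convolution; $\mathcal{D}_{G\text{-gr}}(R):=\mathrm{Mod}_R(\mathcal{D}_{G\text{-gr}}(\mathbb{Z}))$; $\pi_i(M)=\bigoplus_g\pi_i(M_g)$ is the homotopy group for the $t$-structure in which $M$ is (co)connective iff each $M_g$ is, its heart being discrete $G$-graded $R$-modules. $M(h)_g=M_{g+h}$. For homogeneous $f\in R$, $T(M,f)$ is the limit in $\mathcal{D}_{G\text{-gr}}(R)$ of $\cdots\xrightarrow{f}M(-2\deg f)\xrightarrow{f}M(-\deg f)\xrightarrow{f}M$; $M$ is derived gradedwise $I$-complete if $T(M,f)=0$ for all homogeneous $f\in I$. *)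

theory Defs
  imports Main
begin

primrec gmul :: "nat \<Rightarrow> 'g::ab_group_add \<Rightarrow> 'g" where
  "gmul 0 x = 0"
| "gmul (Suc n) x = x + gmul n x"

definition torsion_free :: "'g::ab_group_add set \<Rightarrow> bool" where
  "torsion_free G \<longleftrightarrow> (\<forall>x\<in>G. \<forall>n::nat. n > 0 \<longrightarrow> gmul n x = 0 \<longrightarrow> x = 0)"

definition graded_ring :: "('g::ab_group_add \<Rightarrow> 'r::comm_ring_1 set) \<Rightarrow> bool" where
  "graded_ring Rg \<longleftrightarrow>
     (\<forall>g. 0 \<in> Rg g \<and> (\<forall>a\<in>Rg g. \<forall>b\<in>Rg g. a + b \<in> Rg g \<and> - a \<in> Rg g))
   \<and> 1 \<in> Rg 0
   \<and> (\<forall>g h a b. a \<in> Rg g \<longrightarrow> b \<in> Rg h \<longrightarrow> a * b \<in> Rg (g + h))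
   \<and> (\<forall>r. \<exists>!c. finite {g. c g \<noteq> 0} \<and> (\<forall>g. c g \<in> Rg g)
                 \<and> r = (\<Sum>g\<in>{g. c g \<noteq> 0}. c g))"

definition hcomp :: "('g::ab_group_add \<Rightarrow> 'r::comm_ring_1 set) \<Rightarrow> 'r \<Rightarrow> 'g \<Rightarrow> 'r" where
  "hcomp Rg r = (THE c. finite {g. c g \<noteq> 0} \<and> (\<forall>g. c g \<in> Rg g)
                        \<and> r = (\<Sum>g\<in>{g. c g \<noteq> 0}. c g))"

definition is_ideal :: "'r::comm_ring_1 set \<Rightarrow> bool" where
  "is_ideal I \<longleftrightarrow> 0 \<in> I \<and> (\<forall>a\<in>I. \<forall>b\<in>I. a + b \<in> I) \<and> (\<forall>r. \<forall>a\<in>I. r * a \<in> I)"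

definition homogeneous_ideal :: "('g::ab_group_add \<Rightarrow> 'r::comm_ring_1 set) \<Rightarrow> 'r set \<Rightarrow> bool" where
  "homogeneous_ideal Rg I \<longleftrightarrow> is_ideal I \<and> (\<forall>a\<in>I. \<forall>g. hcomp Rg a g \<in> I)"

definition finitely_generated_ideal :: "'r::comm_ring_1 set \<Rightarrow> bool" where
  "finitely_generated_ideal I \<longleftrightarrow>
     (\<exists>F. finite F \<and> I = {x. \<exists>c. x = (\<Sum>a\<in>F. c a * a)})"

text \<open>A complex of G-graded R-modules is given by its homogeneous pieces
  C k g (homological degree k, internal degree g), which are subgroups of an
  ambient abelian group 'm; differentials d k g : C k g \<rightarrow> C (k-1) g; and the
  action act r k g : C k g \<rightarrow> C k (g+h) of homogeneous ring elements r \<in> Rg h.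
  The graded module in homological degree k is the external direct sum of the C k g.\<close>

definition gr_complex ::
  "('g::ab_group_add \<Rightarrow> 'r::comm_ring_1 set) \<Rightarrow> (int \<Rightarrow> 'g \<Rightarrow> 'm::ab_group_add set)
   \<Rightarrow> (int \<Rightarrow> 'g \<Rightarrow> 'm \<Rightarrow> 'm) \<Rightarrow> ('r \<Rightarrow> int \<Rightarrow> 'g \<Rightarrow> 'm \<Rightarrow> 'm) \<Rightarrow> bool" where
  "gr_complex Rg C d act \<longleftrightarrow>
     (\<forall>k g. 0 \<in> C k g \<and> (\<forall>x\<in>C k g. \<forall>y\<in>C k g. x + y \<in> C k g \<and> - x \<in> C k g))
   \<and> (\<forall>k g. \<forall>x\<in>C k g. d k g x \<in> C (k - 1) g)
   \<and> (\<forall>k g. \<forall>x\<in>C k g. \<forall>y\<in>C k g. d k g (x + y) = d k g x + d k g y)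
   \<and> (\<forall>k g. \<forall>x\<in>C k g. d (k - 1) g (d k g x) = 0)
   \<and> (\<forall>h r k g. r \<in> Rg h \<longrightarrow> (\<forall>x\<in>C k g. act r k g x \<in> C k (g + h)))
   \<and> (\<forall>h r k g. r \<in> Rg h \<longrightarrow> (\<forall>x\<in>C k g. \<forall>y\<in>C k g.
         act r k g (x + y) = act r k g x + act r k g y))
   \<and> (\<forall>h r s k g. r \<in> Rg h \<longrightarrow> s \<in> Rg h \<longrightarrow> (\<forall>x\<in>C k g.
         act (r + s) k g x = act r k g x + act s k g x))
   \<and> (\<forall>k g. \<forall>x\<in>C k g. act 1 k g x = x)
   \<and> (\<forall>h h' r s k g. r \<in> Rg h \<longrightarrow> s \<in> Rg h' \<longrightarrow> (\<forall>x\<in>C k g.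
         act (r * s) k g x = act r k (g + h') (act s k g x)))
   \<and> (\<forall>h r k g. r \<in> Rg h \<longrightarrow> (\<forall>x\<in>C k g.
         d k (g + h) (act r k g x) = act r (k - 1) g (d k g x)))"

text \<open>For f homogeneous of degree e, the degree-g part of the tower
  ... \<rightarrow> M(-2e) \<rightarrow> M(-e) \<rightarrow> M is the tower of complexes X_n = C _ (g - n e) with
  transition maps multiplication by f : X_(n+1) \<rightarrow> X_n.  Its limit in the derived
  category is the fibre of  Phi : prod_n X_n \<rightarrow> prod_n X_n,  Phi(x)_n = x_n - f x_(n+1),
  modelled by the complex Fib_k = prod X^k \<oplus> prod X^(k+1) with differential
  D(x,y) = (d x, Phi x - d y).  T(M,f) = 0 iff this complex is acyclic for every g.\<close>

definition tow_deg :: "'g::ab_group_add \<Rightarrow> 'g \<Rightarrow> nat \<Rightarrow> 'g" where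
  "tow_deg g e n = g - gmul n e"

definition tow_Phi ::
  "('r \<Rightarrow> int \<Rightarrow> 'g::ab_group_add \<Rightarrow> 'm \<Rightarrow> 'm::ab_group_add) \<Rightarrow> 'r \<Rightarrow> 'g \<Rightarrow> 'g \<Rightarrow> int
   \<Rightarrow> (nat \<Rightarrow> 'm) \<Rightarrow> nat \<Rightarrow> 'm" where
  "tow_Phi act f e g k x n = x n - act f k (tow_deg g e (Suc n)) (x (Suc n))"

definition T_vanishes ::
  "(int \<Rightarrow> 'g::ab_group_add \<Rightarrow> 'm::ab_group_add set) \<Rightarrow> (int \<Rightarrow> 'g \<Rightarrow> 'm \<Rightarrow> 'm)
   \<Rightarrow> ('r \<Rightarrow> int \<Rightarrow> 'g \<Rightarrow> 'm \<Rightarrow> 'm) \<Rightarrow> 'g \<Rightarrow> 'r \<Rightarrow> bool" where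
  "T_vanishes C d act e f \<longleftrightarrow>
    (\<forall>g k x y.
       (\<forall>n. x n \<in> C k (tow_deg g e n)) \<and> (\<forall>n. y n \<in> C (k + 1) (tow_deg g e n))
     \<and> (\<forall>n. d k (tow_deg g e n) (x n) = 0)
     \<and> (\<forall>n. tow_Phi act f e g k x n = d (k + 1) (tow_deg g e n) (y n))
     \<longrightarrow> (\<exists>x' y'. (\<forall>n. x' n \<in> C (k + 1) (tow_deg g e n))
               \<and> (\<forall>n. y' n \<in> C (k + 2) (tow_deg g e n))
               \<and> (\<forall>n. x n = d (k + 1) (tow_deg g e n) (x' n))
               \<and> (\<forall>n. y n = tow_Phi act f e g (k + 1) x' n - d (k + 2) (tow_deg g e n) (y' n))))"

definition gr_complete ::
  "('g::ab_group_add \<Rightarrow> 'r::comm_ring_1 set) \<Rightarrow> 'r set \<Rightarrow> (int \<Rightarrow> 'g \<Rightarrow> 'm::ab_group_add set)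
   \<Rightarrow> (int \<Rightarrow> 'g \<Rightarrow> 'm \<Rightarrow> 'm) \<Rightarrow> ('r \<Rightarrow> int \<Rightarrow> 'g \<Rightarrow> 'm \<Rightarrow> 'm) \<Rightarrow> bool" where
  "gr_complete Rg I C d act \<longleftrightarrow> (\<forall>e f. f \<in> I \<longrightarrow> f \<in> Rg e \<longrightarrow> T_vanishes C d act e f)"

text \<open>The discrete graded module pi_i(M) = Z_i/B_i is represented (up to
  quasi-isomorphism) by the two-term complex  B_i \<hookrightarrow> Z_i  in homological degrees 1, 0.\<close>

definition cycles :: "(int \<Rightarrow> 'g \<Rightarrow> 'm::ab_group_add set) \<Rightarrow> (int \<Rightarrow> 'g \<Rightarrow> 'm \<Rightarrow> 'm) \<Rightarrow> int \<Rightarrow> 'g \<Rightarrow> 'm set" where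
  "cycles C d i g = {x \<in> C i g. d i g x = 0}"

definition boundaries :: "(int \<Rightarrow> 'g \<Rightarrow> 'm::ab_group_add set) \<Rightarrow> (int \<Rightarrow> 'g \<Rightarrow> 'm \<Rightarrow> 'm) \<Rightarrow> int \<Rightarrow> 'g \<Rightarrow> 'm set" where
  "boundaries C d i g = d (i + 1) g ` C (i + 1) g"

definition pi_C :: "(int \<Rightarrow> 'g \<Rightarrow> 'm::ab_group_add set) \<Rightarrow> (int \<Rightarrow> 'g \<Rightarrow> 'm \<Rightarrow> 'm) \<Rightarrow> int
                     \<Rightarrow> int \<Rightarrow> 'g \<Rightarrow> 'm set" where
  "pi_C C d i k g = (if k = 1 then boundaries C d i g else if k = 0 then cycles C d i g else {0})"

definition pi_d :: "int \<Rightarrow> 'g \<Rightarrow> 'm::ab_group_add \<Rightarrow> 'm" where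
  "pi_d k g x = (if k = 1 then x else 0)"

definition pi_act :: "('r \<Rightarrow> int \<Rightarrow> 'g \<Rightarrow> 'm \<Rightarrow> 'm::ab_group_add) \<Rightarrow> int \<Rightarrow> 'r \<Rightarrow> int \<Rightarrow> 'g \<Rightarrow> 'm \<Rightarrow> 'm" where
  "pi_act act i r k g x = (if k = 0 \<or> k = 1 then act r i g x else 0)"

end

theory Submission
  imports Defs
begin

lemma tow_deg_Suc: "tow_deg g e (Suc n) + e = tow_deg g e n"
  by (simp add: tow_deg_def algebra_simps)

locale cx =
  fixes Rg :: "'g::ab_group_add \<Rightarrow> 'r::comm_ring_1 set"
    and C :: "int \<Rightarrow> 'g \<Rightarrow> 'm::ab_group_add set"
    and d :: "int \<Rightarrow> 'g \<Rightarrow> 'm \<Rightarrow> 'm"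
    and act :: "'r \<Rightarrow> int \<Rightarrow> 'g \<Rightarrow> 'm \<Rightarrow> 'm"
    and e :: 'g and f :: 'r
  assumes cpx: "gr_complex Rg C d act" and fe: "f \<in> Rg e"
begin

lemmas P = cpx[unfolded gr_complex_def]
lemmas P1 = conjunct1[OF P]
lemmas P2 = conjunct1[OF conjunct2[OF P]]
lemmas P3 = conjunct1[OF conjunct2[OF conjunct2[OF P]]]
lemmas P5 = conjunct1[OF conjunct2[OF conjunct2[OF conjunct2[OF conjunct2[OF P]]]]]
lemmas P6 = conjunct1[OF conjunct2[OF conjunct2[OF conjunct2[OF conjunct2[OF conjunct2[OF P]]]]]]
lemmas P10 = conjunct2[OF conjunct2[OF conjunct2[OF conjunct2[OF conjunct2[OF conjunct2[OF conjunct2[OF conjunct2[OF conjunct2[OF P]]]]]]]]]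

lemma C0: "0 \<in> C k g" using P1 by blast
lemma Cadd: "x \<in> C k g \<Longrightarrow> y \<in> C k g \<Longrightarrow> x + y \<in> C k g" using P1 by blast
lemma Cneg: "x \<in> C k g \<Longrightarrow> - x \<in> C k g" using P1 by blast
lemma Cdiff: "x \<in> C k g \<Longrightarrow> y \<in> C k g \<Longrightarrow> x - y \<in> C k g"
  using Cadd Cneg by (metis diff_conv_add_uminus)
lemma dC: "x \<in> C k g \<Longrightarrow> d k g x \<in> C (k - 1) g" using P2 by blast
lemma dC': "x \<in> C (k + 1) g \<Longrightarrow> d (k + 1) g x \<in> C k g" using dC[of x "k+1" g] by simp
lemma d_add: "x \<in> C k g \<Longrightarrow> y \<in> C k g \<Longrightarrow> d k g (x + y) = d k g x + d k g y"
  using P3 by blast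
lemma d0: "d k g 0 = 0" using d_add[OF C0 C0, of k g] by simp
lemma d_neg: "x \<in> C k g \<Longrightarrow> d k g (- x) = - d k g x"
proof -
  assume a: "x \<in> C k g"
  have "d k g x + d k g (- x) = 0" using d_add[OF a Cneg[OF a]] d0 by simp
  thus ?thesis by (metis add.commute eq_neg_iff_add_eq_0)
qed
lemma d_diff: assumes a: "x \<in> C k g" and b: "y \<in> C k g" shows "d k g (x - y) = d k g x - d k g y"
proof -
  have "d k g (x + - y) = d k g x + d k g (- y)" by (rule d_add[OF a Cneg[OF b]])
  thus ?thesis by (simp only: diff_conv_add_uminus d_neg[OF b])
qed
lemma actC: "x \<in> C k g \<Longrightarrow> act f k g x \<in> C k (g + e)" using P5 fe by blast
lemma act_add: "x \<in> C k g \<Longrightarrow> y \<in> C k g \<Longrightarrow> act f k g (x + y) = act f k g x + act f k g y"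
  using P6 fe by blast
lemma act0: "act f k g 0 = 0" using act_add[OF C0 C0, of k g] by simp
lemma comm: "x \<in> C k g \<Longrightarrow> d k (g + e) (act f k g x) = act f (k - 1) g (d k g x)"
  using P10 fe by blast

abbreviation D where "D g n \<equiv> tow_deg g e n"

lemma actC': "x \<in> C k (D g (Suc n)) \<Longrightarrow> act f k (D g (Suc n)) x \<in> C k (D g n)"
  using actC[of x k "D g (Suc n)"] tow_deg_Suc[of g e n] by simp

lemma PhiC: "(\<And>n. u n \<in> C k (D g n)) \<Longrightarrow> tow_Phi act f e g k u n \<in> C k (D g n)"
  unfolding tow_Phi_def by (intro Cdiff actC') auto

lemma Phi_d:
  assumes "\<And>n. u n \<in> C (k + 1) (D g n)"
  shows "d (k + 1) (D g n) (tow_Phi act f e g (k + 1) u n)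
       = tow_Phi act f e g k (\<lambda>n. d (k + 1) (D g n) (u n)) n"
proof -
  have a: "act f (k + 1) (D g (Suc n)) (u (Suc n)) \<in> C (k + 1) (D g n)"
    using actC' assms by blast
  have "d (k + 1) (D g n) (act f (k + 1) (D g (Suc n)) (u (Suc n)))
      = d (k + 1) (D g (Suc n) + e) (act f (k + 1) (D g (Suc n)) (u (Suc n)))"
    using tow_deg_Suc[of g e n] by simp
  also have "\<dots> = act f k (D g (Suc n)) (d (k + 1) (D g (Suc n)) (u (Suc n)))"
    using comm[OF assms[of "Suc n"]] by simp
  finally show ?thesis unfolding tow_Phi_def using d_diff[OF assms a] by simp
qed

lemma Phi_add:
  assumes "\<And>n. u n \<in> C k (D g n)" "\<And>n. v n \<in> C k (D g n)"
  shows "tow_Phi act f e g k (\<lambda>n. u n + v n) n = tow_Phi act f e g k u n + tow_Phi act f e g k v n"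
  unfolding tow_Phi_def using act_add[OF assms(1,2)[of "Suc n"]] by (simp add: algebra_simps)

definition L0 where "L0 i g \<longleftrightarrow> (\<forall>x. (\<forall>n. x n \<in> cycles C d i (D g n))
   \<and> (\<forall>n. tow_Phi act f e g i x n \<in> boundaries C d i (D g n))
   \<longrightarrow> (\<forall>n. x n \<in> boundaries C d i (D g n)))"

definition L1 where "L1 i g \<longleftrightarrow> (\<forall>z. (\<forall>n. z n \<in> cycles C d i (D g n)) \<longrightarrow>
   (\<exists>x. (\<forall>n. x n \<in> cycles C d i (D g n))
      \<and> (\<forall>n. z n - tow_Phi act f e g i x n \<in> boundaries C d i (D g n))))"

lemma bnd_neg: "b \<in> boundaries C d i g \<Longrightarrow> - b \<in> boundaries C d i g"
proof -
  assume "b \<in> boundaries C d i g"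
  then obtain c where c: "c \<in> C (i + 1) g" "b = d (i + 1) g c" unfolding boundaries_def by blast
  hence "- b = d (i + 1) g (- c)" using d_neg by simp
  thus ?thesis unfolding boundaries_def using Cneg[OF c(1)] by blast
qed

lemma bnd0: "0 \<in> boundaries C d i g"
  unfolding boundaries_def using d0 C0 by (metis image_iff)

lemma cyc0: "0 \<in> cycles C d i g"
  unfolding cycles_def using d0 C0 by simp


lemma choose_bnd:
  assumes "\<forall>n. b n \<in> boundaries C d i (D g n)"
  obtains u where "\<And>n. u n \<in> C (i + 1) (D g n)" "\<And>n. b n = d (i + 1) (D g n) (u n)"
proof -
  have "\<forall>n. \<exists>v. v \<in> C (i + 1) (D g n) \<and> b n = d (i + 1) (D g n) v"
    using assms unfolding boundaries_def by blast
  then obtain u where "\<forall>n. u n \<in> C (i + 1) (D g n) \<and> b n = d (i + 1) (D g n) (u n)"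
    by metis
  thus ?thesis using that by blast
qed

lemma B_to: "T_vanishes C d act e f \<Longrightarrow> L0 i g \<and> L1 i g"
proof -
  assume T: "T_vanishes C d act e f"
  have "L0 i g" unfolding L0_def
  proof (intro allI impI)
    fix x assume h: "(\<forall>n. x n \<in> cycles C d i (D g n))
       \<and> (\<forall>n. tow_Phi act f e g i x n \<in> boundaries C d i (D g n))"
    then obtain y where y: "\<And>n. y n \<in> C (i + 1) (D g n)"
      "\<And>n. tow_Phi act f e g i x n = d (i + 1) (D g n) (y n)"
      using choose_bnd by blast
    have "\<exists>x' y'. (\<forall>n. x' n \<in> C (i + 1) (D g n))
               \<and> (\<forall>n. y' n \<in> C (i + 2) (D g n))
               \<and> (\<forall>n. x n = d (i + 1) (D g n) (x' n))
               \<and> (\<forall>n. y n = tow_Phi act f e g (i + 1) x' n - d (i + 2) (D g n) (y' n))"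
      using T[unfolded T_vanishes_def, rule_format, of x i g y] h y
      by (auto simp: cycles_def)
    then show "x n \<in> boundaries C d i (D g n)" for n
      unfolding boundaries_def by blast
  qed
  moreover have "L1 i g" unfolding L1_def
  proof (intro allI impI)
    fix z assume h: "\<forall>n. z n \<in> cycles C d i (D g n)"
    have pre: "(\<forall>n. (\<lambda>n. 0) n \<in> C (i - 1) (D g n)) \<and> (\<forall>n. z n \<in> C (i - 1 + 1) (D g n))
     \<and> (\<forall>n. d (i - 1) (D g n) ((\<lambda>n. 0) n) = 0)
     \<and> (\<forall>n. tow_Phi act f e g (i - 1) (\<lambda>n. 0) n = d (i - 1 + 1) (D g n) (z n))"
      using h by (simp add: C0 d0 act0 tow_Phi_def cycles_def)
    obtain x' y' where xy: "\<And>n. x' n \<in> C (i - 1 + 1) (D g n)"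
               "\<And>n. y' n \<in> C (i - 1 + 2) (D g n)"
               "\<And>n. 0 = d (i - 1 + 1) (D g n) (x' n)"
               "\<And>n. z n = tow_Phi act f e g (i - 1 + 1) x' n - d (i - 1 + 2) (D g n) (y' n)"
      using T[unfolded T_vanishes_def, rule_format, OF pre] by metis
    have e1: "i - 1 + 1 = i" "i - 1 + 2 = i + 1" by simp_all
    have c: "\<forall>n. x' n \<in> cycles C d i (D g n)" using xy(1,3) unfolding e1 cycles_def by simp
    have "\<forall>n. z n - tow_Phi act f e g i x' n \<in> boundaries C d i (D g n)"
    proof
      fix n
      have "z n - tow_Phi act f e g i x' n = d (i + 1) (D g n) (- y' n)"
        using xy(4)[of n] d_neg[OF xy(2)[of n, unfolded e1]] unfolding e1 by simp
      thus "z n - tow_Phi act f e g i x' n \<in> boundaries C d i (D g n)"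
        unfolding boundaries_def using Cneg[OF xy(2)[of n, unfolded e1]] by blast
    qed
    with c show "\<exists>x. (\<forall>n. x n \<in> cycles C d i (D g n))
      \<and> (\<forall>n. z n - tow_Phi act f e g i x n \<in> boundaries C d i (D g n))" by blast
  qed
  ultimately show ?thesis by blast
qed

lemma B_from: assumes L: "\<And>i g. L0 i g \<and> L1 i g" shows "T_vanishes C d act e f"
  unfolding T_vanishes_def
proof (intro allI impI)
  fix g k x y
  assume "(\<forall>n. x n \<in> C k (D g n)) \<and> (\<forall>n. y n \<in> C (k + 1) (D g n))
     \<and> (\<forall>n. d k (D g n) (x n) = 0)
     \<and> (\<forall>n. tow_Phi act f e g k x n = d (k + 1) (D g n) (y n))"
  hence hx: "\<And>n. x n \<in> C k (D g n)" and hy: "\<And>n. y n \<in> C (k + 1) (D g n)"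
    and dx: "\<And>n. d k (D g n) (x n) = 0"
    and ph: "\<And>n. tow_Phi act f e g k x n = d (k + 1) (D g n) (y n)" by auto
  have "\<forall>n. x n \<in> boundaries C d k (D g n)"
    using L[of k g] hx dx ph hy unfolding L0_def cycles_def boundaries_def by auto
  then obtain u where u: "\<And>n. u n \<in> C (k + 1) (D g n)" "\<And>n. x n = d (k + 1) (D g n) (u n)"
    using choose_bnd by blast
  define w where "w n = y n - tow_Phi act f e g (k + 1) u n" for n
  have PuC: "\<And>n. tow_Phi act f e g (k + 1) u n \<in> C (k + 1) (D g n)" using PhiC u(1) by blast
  have xe: "(\<lambda>n. d (k + 1) (D g n) (u n)) = x" using u(2) by (simp add: fun_eq_iff)
  have wc: "\<forall>n. w n \<in> cycles C d (k + 1) (D g n)"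
  proof
    fix n
    have "d (k + 1) (D g n) (w n) = d (k + 1) (D g n) (y n) - tow_Phi act f e g k x n"
      unfolding w_def using d_diff[OF hy PuC] Phi_d[OF u(1)] xe by simp
    thus "w n \<in> cycles C d (k + 1) (D g n)" using ph Cdiff[OF hy PuC] w_def
      unfolding cycles_def by simp
  qed
  then obtain v where v: "\<forall>n. v n \<in> cycles C d (k + 1) (D g n)"
    "\<forall>n. w n - tow_Phi act f e g (k + 1) v n \<in> boundaries C d (k + 1) (D g n)"
    using L[of "k + 1" g] unfolding L1_def by blast
  obtain b where b: "\<And>n. b n \<in> C (k + 1 + 1) (D g n)"
    "\<And>n. w n - tow_Phi act f e g (k + 1) v n = d (k + 1 + 1) (D g n) (b n)"
    using choose_bnd[OF v(2)] by blast
  have e2: "k + 1 + 1 = k + 2" by simp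
  have vC: "\<And>n. v n \<in> C (k + 1) (D g n)" and dv: "\<And>n. d (k + 1) (D g n) (v n) = 0"
    using v(1) unfolding cycles_def by auto
  show "\<exists>x' y'. (\<forall>n. x' n \<in> C (k + 1) (D g n))
               \<and> (\<forall>n. y' n \<in> C (k + 2) (D g n))
               \<and> (\<forall>n. x n = d (k + 1) (D g n) (x' n))
               \<and> (\<forall>n. y n = tow_Phi act f e g (k + 1) x' n - d (k + 2) (D g n) (y' n))"
  proof (intro exI conjI allI)
    fix n
    show "u n + v n \<in> C (k + 1) (D g n)" using Cadd u(1) vC by blast
    show "- b n \<in> C (k + 2) (D g n)" using Cneg b(1) e2 by simp
    show "x n = d (k + 1) (D g n) (u n + v n)" using d_add[OF u(1) vC] u(2) dv by simp
    have "tow_Phi act f e g (k + 1) (\<lambda>n. u n + v n) n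
       = tow_Phi act f e g (k + 1) u n + tow_Phi act f e g (k + 1) v n"
      using Phi_add[OF u(1) vC] by simp
    moreover have "d (k + 2) (D g n) (- b n) = - d (k + 2) (D g n) (b n)"
      using d_neg b(1) e2 by simp
    moreover have "w n - tow_Phi act f e g (k + 1) v n = d (k + 2) (D g n) (b n)"
      using b(2) e2 by simp
    ultimately show "y n = tow_Phi act f e g (k + 1) (\<lambda>n. u n + v n) n - d (k + 2) (D g n) (- b n)"
      unfolding w_def by (simp add: algebra_simps)
  qed
qed

lemma B: "T_vanishes C d act e f \<longleftrightarrow> (\<forall>i g. L0 i g \<and> L1 i g)"
  using B_to B_from by blast


lemma piPhi01: "k = 0 \<or> k = 1 \<Longrightarrow> tow_Phi (pi_act act i) f e g k x n = tow_Phi act f e g i x n"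
  unfolding tow_Phi_def pi_act_def by auto

lemma piPhi_other: "k \<noteq> 0 \<Longrightarrow> k \<noteq> 1 \<Longrightarrow> tow_Phi (pi_act act i) f e g k x n = x n"
  unfolding tow_Phi_def pi_act_def by auto

lemma piC0: "pi_C C d i 0 g = cycles C d i g" by (simp add: pi_C_def)
lemma piC1: "pi_C C d i 1 g = boundaries C d i g" by (simp add: pi_C_def)
lemma piCo: "k \<noteq> 0 \<Longrightarrow> k \<noteq> 1 \<Longrightarrow> pi_C C d i k g = {0}" by (simp add: pi_C_def)
lemma piC_0: "0 \<in> pi_C C d i k g" by (simp add: pi_C_def bnd0 cyc0)

lemma A_to: assumes T: "T_vanishes (pi_C C d i) pi_d (pi_act act i) e f" shows "L0 i g \<and> L1 i g"
proof
  show "L0 i g" unfolding L0_def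
  proof (intro allI impI)
    fix x n assume h: "(\<forall>n. x n \<in> cycles C d i (D g n))
       \<and> (\<forall>n. tow_Phi act f e g i x n \<in> boundaries C d i (D g n))"
    have pre: "(\<forall>n. x n \<in> pi_C C d i 0 (D g n)) \<and> (\<forall>n. (\<lambda>n. tow_Phi act f e g i x n) n \<in> pi_C C d i (0 + 1) (D g n))
     \<and> (\<forall>n. pi_d 0 (D g n) (x n) = 0)
     \<and> (\<forall>n. tow_Phi (pi_act act i) f e g 0 x n = pi_d (0 + 1) (D g n) ((\<lambda>n. tow_Phi act f e g i x n) n))"
      using h by (simp add: piC0 piC1 pi_d_def piPhi01)
    obtain x' y' where "\<And>n. x' n \<in> pi_C C d i (0 + 1) (D g n)"
      "\<And>n. x n = pi_d (0 + 1) (D g n) (x' n)"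
      using T[unfolded T_vanishes_def, rule_format, OF pre] by metis
    then show "x n \<in> boundaries C d i (D g n)" by (simp add: piC1 pi_d_def)
  qed
  show "L1 i g" unfolding L1_def
  proof (intro allI impI)
    fix z assume h: "\<forall>n. z n \<in> cycles C d i (D g n)"
    have pre: "(\<forall>n. (\<lambda>n. 0) n \<in> pi_C C d i (-1) (D g n)) \<and> (\<forall>n. z n \<in> pi_C C d i (-1 + 1) (D g n))
     \<and> (\<forall>n. pi_d (-1) (D g n) ((\<lambda>n. 0) n) = 0)
     \<and> (\<forall>n. tow_Phi (pi_act act i) f e g (-1) (\<lambda>n. 0) n = pi_d (-1 + 1) (D g n) (z n))"
      using h by (simp add: piC0 piC_0 pi_d_def piPhi_other)
    obtain x' y' where xy: "\<And>n. x' n \<in> pi_C C d i (-1 + 1) (D g n)"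
      "\<And>n. y' n \<in> pi_C C d i (-1 + 2) (D g n)"
      "\<And>n. z n = tow_Phi (pi_act act i) f e g (-1 + 1) x' n - pi_d (-1 + 2) (D g n) (y' n)"
      using T[unfolded T_vanishes_def, rule_format, OF pre] by metis
    have c: "\<forall>n. x' n \<in> cycles C d i (D g n)" using xy(1) by (simp add: piC0)
    have "\<forall>n. z n - tow_Phi act f e g i x' n \<in> boundaries C d i (D g n)"
    proof
      fix n
      have "z n - tow_Phi act f e g i x' n = - y' n"
        using xy(3)[of n] by (simp add: piPhi01 pi_d_def)
      thus "z n - tow_Phi act f e g i x' n \<in> boundaries C d i (D g n)"
        using bnd_neg xy(2)[of n] by (simp add: piC1)
    qed
    with c show "\<exists>x. (\<forall>n. x n \<in> cycles C d i (D g n))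
      \<and> (\<forall>n. z n - tow_Phi act f e g i x n \<in> boundaries C d i (D g n))" by blast
  qed
qed

lemma A_from: assumes L: "\<And>g. L0 i g \<and> L1 i g"
  shows "T_vanishes (pi_C C d i) pi_d (pi_act act i) e f"
  unfolding T_vanishes_def
proof (intro allI impI)
  fix g k x y
  assume "(\<forall>n. x n \<in> pi_C C d i k (D g n)) \<and> (\<forall>n. y n \<in> pi_C C d i (k + 1) (D g n))
     \<and> (\<forall>n. pi_d k (D g n) (x n) = 0)
     \<and> (\<forall>n. tow_Phi (pi_act act i) f e g k x n = pi_d (k + 1) (D g n) (y n))"
  hence hx: "\<And>n. x n \<in> pi_C C d i k (D g n)" and hy: "\<And>n. y n \<in> pi_C C d i (k + 1) (D g n)"
    and dx: "\<And>n. pi_d k (D g n) (x n) = 0"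
    and ph: "\<And>n. tow_Phi (pi_act act i) f e g k x n = pi_d (k + 1) (D g n) (y n)" by auto
  show "\<exists>x' y'. (\<forall>n. x' n \<in> pi_C C d i (k + 1) (D g n))
               \<and> (\<forall>n. y' n \<in> pi_C C d i (k + 2) (D g n))
               \<and> (\<forall>n. x n = pi_d (k + 1) (D g n) (x' n))
               \<and> (\<forall>n. y n = tow_Phi (pi_act act i) f e g (k + 1) x' n - pi_d (k + 2) (D g n) (y' n))"
  proof (cases "k = 0")
    case True
    have xc: "\<forall>n. x n \<in> cycles C d i (D g n)" using hx True by (simp add: piC0)
    have yv: "\<And>n. y n = tow_Phi act f e g i x n" using ph True by (simp add: piPhi01 pi_d_def)
    have "\<forall>n. tow_Phi act f e g i x n \<in> boundaries C d i (D g n)"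
      using hy True yv by (simp add: piC1)
    hence xb: "\<forall>n. x n \<in> boundaries C d i (D g n)" using L[of g] xc unfolding L0_def by blast
    show ?thesis
      apply (rule exI[of _ x], rule exI[of _ "\<lambda>n. 0"])
      using True xb yv by (simp add: piC1 piC_0 pi_d_def piPhi01)
  next
    case k0: False
    show ?thesis
    proof (cases "k = -1")
      case True
      have yc: "\<forall>n. y n \<in> cycles C d i (D g n)" using hy True by (simp add: piC0)
      have x0: "\<And>n. x n = 0" using hx True by (simp add: piCo)
      obtain v where v: "\<forall>n. v n \<in> cycles C d i (D g n)"
        "\<forall>n. y n - tow_Phi act f e g i v n \<in> boundaries C d i (D g n)"
        using L[of g] yc unfolding L1_def by blast
      have yb: "\<forall>n. tow_Phi act f e g i v n - y n \<in> boundaries C d i (D g n)"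
        using v(2) bnd_neg by (metis minus_diff_eq)
      show ?thesis
        apply (rule exI[of _ v], rule exI[of _ "\<lambda>n. tow_Phi act f e g i v n - y n"])
        using True x0 v(1) yb by (simp add: piC0 piC1 pi_d_def piPhi01)
    next
      case False
      have x0: "\<And>n. x n = 0"
      proof -
        fix n
        show "x n = 0"
        proof (cases "k = 1")
          case True thus ?thesis using dx[of n] by (simp add: pi_d_def)
        next
          case False thus ?thesis using hx[of n] k0 by (simp add: piCo)
        qed
      qed
      have y0: "\<And>n. y n = 0" using hy k0 False by (simp add: piCo)
      show ?thesis
        apply (rule exI[of _ "\<lambda>n. 0"], rule exI[of _ "\<lambda>n. 0"])
        using x0 y0 by (simp add: piC_0 pi_d_def tow_Phi_def pi_act_def act0)
    qed
  qed
qed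

lemma A: "T_vanishes (pi_C C d i) pi_d (pi_act act i) e f \<longleftrightarrow> (\<forall>g. L0 i g \<and> L1 i g)"
  using A_to A_from by blast

end

theorem lemma4p7:
  fixes Rg :: "'g::ab_group_add \<Rightarrow> 'r::comm_ring_1 set"
    and I :: "'r set"
    and C :: "int \<Rightarrow> 'g \<Rightarrow> 'm::ab_group_add set"
    and d :: "int \<Rightarrow> 'g \<Rightarrow> 'm \<Rightarrow> 'm"
    and act :: "'r \<Rightarrow> int \<Rightarrow> 'g \<Rightarrow> 'm \<Rightarrow> 'm"
  assumes "torsion_free (UNIV :: 'g set)"
    and "graded_ring Rg"
    and "homogeneous_ideal Rg I"
    and "finitely_generated_ideal I"
    and "gr_complex Rg C d act"
  shows "gr_complete Rg I C d act \<longleftrightarrow>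
         (\<forall>i::int. gr_complete Rg I (pi_C C d i) pi_d (pi_act act i))"
proof -
  have key: "T_vanishes C d act e f \<longleftrightarrow> (\<forall>i. T_vanishes (pi_C C d i) pi_d (pi_act act i) e f)"
    if "f \<in> Rg e" for e f
  proof -
    interpret cx Rg C d act e f using assms(5) that by unfold_locales
    show ?thesis using A B by blast
  qed
  show ?thesis unfolding gr_complete_def using key by blast
qed

end
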